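(* Let $n\ge3$, $n\ne4$, and for $a\in\mathbb{B}^n$ define on $\overline{\mathbb{B}^n}$ $$U_a(x)=\Big(\frac{1-|a|^2}{|a|^2|x|^2-2a\cdot x+1}\Big)^{\frac{n-4}2}+\frac{n-4}4(1-|x|^2)\Big(\frac{1-|a|^2}{|a|^2|x|^2-2a\cdot x+1}\Big)^{\frac{n-2}2}.$$ Then $U_a\in C^\infty(\overline{\mathbb{B}^n})$, $U_a>0$, and with $u=U_a|_{\mathbb{S}^{n-1}}$ it solves $$\Delta^2U_a=0\ \text{in }\mathbb{B}^n,\qquad \frac{\partial U_a}{\partial r}=-\frac{n-4}2u\ \text{on }\mathbb{S}^{n-1},\qquad \mathscr{B}_3^3U_a=\frac{n(n-2)(n-4)}4u^{\frac{n+2}{n-4}}\ \text{on }\mathbb{S}^{n-1}.$$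
   Context: For $U$ smooth on $\overline{\mathbb{B}^n}$ satisfying $\partial_rU=-\frac{n-4}2u$ on $\mathbb{S}^{n-1}$ with $u=U|_{\mathbb{S}^{n-1}}$, $$\mathscr{B}_3^3U=-\frac{\partial\Delta U}{\partial r}-\frac{n-4}2\frac{\partial^2U}{\partial r^2}-\frac n2\Delta_{\mathbb{S}^{n-1}}u+\frac{(n-4)(n^2-3n+4)}4u\quad\text{on }\mathbb{S}^{n-1}.$$ *)

theory Defs
  imports "HOL-Analysis.Analysis"
begin

definition partial_deriv :: "'n::finite \<Rightarrow> (real^'n \<Rightarrow> real) \<Rightarrow> real^'n \<Rightarrow> real" where
  "partial_deriv i f x = deriv (\<lambda>t. f (x + t *\<^sub>R axis i 1)) 0"

definition smooth_on_open :: "(real^'n::finite) set \<Rightarrow> (real^'n \<Rightarrow> real) \<Rightarrow> bool" where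
  "smooth_on_open S f \<longleftrightarrow> open S \<and>
     (\<forall>is. (foldr partial_deriv is f) differentiable_on S)"

definition smooth_on_closed_ball :: "(real^'n::finite \<Rightarrow> real) \<Rightarrow> bool" where
  "smooth_on_closed_ball f \<longleftrightarrow> (\<exists>S. cball 0 1 \<subseteq> S \<and> smooth_on_open S f)"

definition laplacian :: "(real^'n::finite \<Rightarrow> real) \<Rightarrow> real^'n \<Rightarrow> real" where
  "laplacian f x = (\<Sum>i\<in>UNIV. partial_deriv i (partial_deriv i f) x)"

text \<open>Radial derivatives at a point x (used for |x| = 1): d/dr f(r x) at r = 1.\<close>
definition radial_deriv :: "(real^'n::finite \<Rightarrow> real) \<Rightarrow> real^'n \<Rightarrow> real" where
  "radial_deriv f x = deriv (\<lambda>r. f (r *\<^sub>R x)) 1"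

definition radial_deriv2 :: "(real^'n::finite \<Rightarrow> real) \<Rightarrow> real^'n \<Rightarrow> real" where
  "radial_deriv2 f x = deriv (deriv (\<lambda>r. f (r *\<^sub>R x))) 1"

text \<open>Laplace-Beltrami operator of S^{n-1} applied to u = f restricted to the sphere:
  the Euclidean Laplacian of the 0-homogeneous extension y \<mapsto> u(y/|y|), at |x| = 1.\<close>
definition sphere_laplacian :: "(real^'n::finite \<Rightarrow> real) \<Rightarrow> real^'n \<Rightarrow> real" where
  "sphere_laplacian f x = laplacian (\<lambda>y. f (y /\<^sub>R norm y)) x"

text \<open>The boundary operator B_3^3 (for U with dU/dr = -(n-4)/2 u on the sphere).\<close>
definition B33 :: "(real^'n::finite \<Rightarrow> real) \<Rightarrow> real^'n \<Rightarrow> real" where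
  "B33 U x = (let n = real CARD('n) in
      - radial_deriv (laplacian U) x - (n - 4) / 2 * radial_deriv2 U x
      - n / 2 * sphere_laplacian U x + (n - 4) * (n\<^sup>2 - 3 * n + 4) / 4 * U x)"

definition U_bubble :: "real^'n::finite \<Rightarrow> real^'n \<Rightarrow> real" where
  "U_bubble a x = (let n = real CARD('n);
      q = (1 - (norm a)\<^sup>2) / ((norm a)\<^sup>2 * (norm x)\<^sup>2 - 2 * (a \<bullet> x) + 1) in
      q powr ((n - 4) / 2) + (n - 4) / 4 * (1 - (norm x)\<^sup>2) * q powr ((n - 2) / 2))"

end

theory Submission imports Defs begin

lemma line_inner:
  fixes y :: "real^'n::finite"
  shows "inner (y + h *\<^sub>R axis i 1) (y + h *\<^sub>R axis i 1) = inner y y + 2*h*(y$i) + h^2"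
  by (simp add: inner_add inner_axis inner_axis' inner_commute algebra_simps power2_eq_square)

lemma line_a:
  fixes y :: "real^'n::finite"
  shows "inner a (y + h *\<^sub>R axis i 1) = inner a y + h * (a$i)"
  by (simp add: inner_add inner_axis algebra_simps)

lemma pd_line:
  assumes "((\<lambda>h. f (y + h *\<^sub>R axis i 1)) has_real_derivative d) (at 0)"
  shows "partial_deriv i f y = d"
  using assms by (simp add: partial_deriv_def DERIV_imp_deriv)

lemma pd_local:
  fixes y :: "real^'n::finite"
  assumes "open S" "y \<in> S" "\<And>z. z \<in> S \<Longrightarrow> f z = g z"
  shows "partial_deriv i f y = partial_deriv i g y"
proof -
  have c: "continuous_on UNIV (\<lambda>h::real. y + h *\<^sub>R axis i (1::real))"
    by (intro continuous_intros)
  have "open {h::real. y + h *\<^sub>R axis i 1 \<in> S}"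
    using continuous_open_preimage[OF c open_UNIV assms(1)] by (simp add: vimage_def)
  moreover have "(0::real) \<in> {h. y + h *\<^sub>R axis i 1 \<in> S}" using assms by simp
  ultimately have "eventually (\<lambda>h. y + h *\<^sub>R axis i 1 \<in> S) (nhds (0::real))"
    using eventually_nhds_in_open[of "{h::real. y + h *\<^sub>R axis i 1 \<in> S}" 0] by simp
  then have "eventually (\<lambda>h. f (y + h *\<^sub>R axis i 1) = g (y + h *\<^sub>R axis i 1)) (nhds (0::real))"
    by eventually_elim (use assms in auto)
  then show ?thesis unfolding partial_deriv_def by (rule deriv_cong_ev) simp
qed

lemma pd_diff:
  fixes y :: "real^'n::finite"
  assumes "f differentiable (at y)"
  shows "((\<lambda>h. f (y + h *\<^sub>R axis i 1)) has_real_derivative partial_deriv i f y) (at 0)"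
proof -
  obtain f' where f': "(f has_derivative f') (at y)" using assms by (auto simp: differentiable_def)
  have l: "((\<lambda>h::real. y + h *\<^sub>R axis i 1) has_derivative (\<lambda>h. h *\<^sub>R axis i 1)) (at 0)"
    by (auto intro!: derivative_eq_intros)
  have "((\<lambda>h. f (y + h *\<^sub>R axis i 1)) has_derivative (\<lambda>h. f' (h *\<^sub>R axis i 1))) (at 0)"
    using has_derivative_compose[OF l] f' by simp
  moreover have "(\<lambda>h. f' (h *\<^sub>R axis i 1)) = (\<lambda>h. f' (axis i 1) * h)"
    using has_derivative_bounded_linear[OF f'] by (auto simp: linear_simps(5) bounded_linear.linear mult.commute linear_cmul)
  ultimately have d: "((\<lambda>h. f (y + h *\<^sub>R axis i 1)) has_real_derivative f' (axis i 1)) (at 0)"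
    by (simp add: has_field_derivative_def)
  with pd_line[OF d] show ?thesis by simp
qed

inductive sm :: "(real^'n::finite) set \<Rightarrow> (real^'n \<Rightarrow> real) \<Rightarrow> bool" for S where
  sm_const: "sm S (\<lambda>x. c)"
| sm_coord: "sm S (\<lambda>x. x $ j)"
| sm_add: "sm S f \<Longrightarrow> sm S g \<Longrightarrow> sm S (\<lambda>x. f x + g x)"
| sm_mult: "sm S f \<Longrightarrow> sm S g \<Longrightarrow> sm S (\<lambda>x. f x * g x)"
| sm_powr: "sm S f \<Longrightarrow> (\<forall>x\<in>S. 0 < f x) \<Longrightarrow> sm S (\<lambda>x. f x powr p)"
| sm_cong: "sm S f \<Longrightarrow> (\<forall>x\<in>S. f x = g x) \<Longrightarrow> sm S g"

lemma sm_main: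
  assumes "open S" "sm S f"
  shows "(\<forall>x\<in>S. f differentiable (at x)) \<and> (\<forall>i. sm S (partial_deriv i f))"
  using assms(2)
proof induction
  case (sm_const c)
  have "partial_deriv i (\<lambda>x. c) y = 0" for i and y :: "real^'a"
    by (rule pd_line) (auto intro!: derivative_eq_intros)
  then show ?case by (auto intro: sm.sm_const[of S 0, simplified])
next
  case (sm_coord j)
  have "partial_deriv i (\<lambda>x. x $ j) y = (if j = i then 1 else 0)" for i and y :: "real^'a"
    by (rule pd_line) (auto simp: axis_def intro!: derivative_eq_intros)
  moreover have "(\<lambda>x::real^'a. x $ j) differentiable (at y)" for y
    using bounded_linear_vec_nth[of j] bounded_linear_imp_differentiable by blast
  ultimately show ?case by (auto intro: sm.sm_const)
next
  case (sm_add f g)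
  have eq: "partial_deriv i (\<lambda>x. f x + g x) y = partial_deriv i f y + partial_deriv i g y" if "y \<in> S" for i y
    using that sm_add.IH by (intro pd_line) (auto intro!: derivative_eq_intros pd_diff)
  have "sm S (partial_deriv i (\<lambda>x. f x + g x))" for i
    by (rule sm.sm_cong[of S "\<lambda>y. partial_deriv i f y + partial_deriv i g y"])
       (use sm_add.IH eq in \<open>auto intro: sm.sm_add\<close>)
  then show ?case using sm_add.IH by (auto intro: differentiable_add)
next
  case (sm_mult f g)
  have eq: "partial_deriv i (\<lambda>x. f x * g x) y = partial_deriv i f y * g y + f y * partial_deriv i g y" if "y \<in> S" for i y
    using that sm_mult.IH by (intro pd_line) (auto intro!: derivative_eq_intros pd_diff)
  have "sm S (partial_deriv i (\<lambda>x. f x * g x))" for i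
    by (rule sm.sm_cong[of S "\<lambda>y. partial_deriv i f y * g y + f y * partial_deriv i g y"])
       (use sm.sm_add[OF sm.sm_mult[OF _ sm_mult.hyps(2)] sm.sm_mult[OF sm_mult.hyps(1)]] sm_mult.IH eq in auto)
  then show ?case using sm_mult.IH by (auto intro: differentiable_mult)
next
  case (sm_powr f p)
  have eq: "partial_deriv i (\<lambda>x. f x powr p) y = p * f y powr (p - 1) * partial_deriv i f y" if "y \<in> S" for i y
  proof (rule pd_line)
    have "((\<lambda>h. f (y + h *\<^sub>R axis i 1)) has_real_derivative partial_deriv i f y) (at 0)"
      using that sm_powr.IH by (intro pd_diff) auto
    from DERIV_fun_powr[OF this, of p] that sm_powr.hyps
    show "((\<lambda>h. f (y + h *\<^sub>R axis i 1) powr p) has_real_derivative p * f y powr (p - 1) * partial_deriv i f y) (at 0)"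
      by simp
  qed
  have "sm S (partial_deriv i (\<lambda>x. f x powr p))" for i
  proof -
    have A: "sm S (\<lambda>y. p * f y powr (p - 1) * partial_deriv i f y)"
      using sm.sm_mult[OF sm.sm_mult[OF sm.sm_const[of S p] sm.sm_powr[OF sm_powr.hyps, of "p-1"]]
          spec[OF conjunct2[OF sm_powr.IH], of i]] by simp
    show ?thesis by (rule sm.sm_cong[OF A]) (simp add: eq)
  qed
  moreover have "(\<lambda>x. f x powr p) differentiable (at y)" if "y \<in> S" for y
  proof -
    have "f differentiable (at y)" using that sm_powr.IH by simp
    then obtain f' where d: "(f has_derivative f') (at y)" by (auto simp: differentiable_def)
    have pos: "0 < f y" using that sm_powr.hyps(2) by blast
    have "((\<lambda>x. f x powr p) has_derivative (\<lambda>h. f y powr p * (0 * ln (f y) + f' h * p / f y))) (at y)"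
      by (rule has_derivative_powr[OF d has_derivative_const pos]) simp
    then show ?thesis unfolding differentiable_def by blast
  qed
  ultimately show ?case by blast
next
  case (sm_cong f g)
  have eq: "partial_deriv i g y = partial_deriv i f y" if "y \<in> S" for i y
    using that sm_cong.hyps assms(1) by (intro pd_local) auto
  moreover have "g differentiable (at y)" if "y \<in> S" for y
  proof -
    have "f differentiable (at y)" using that sm_cong.IH by simp
    then obtain f' where d: "(f has_derivative f') (at y)" by (auto simp: differentiable_def)
    have "(g has_derivative f') (at y)"
      by (rule has_derivative_transform_within_open[OF d assms(1) that]) (use sm_cong.hyps in auto)
    then show ?thesis unfolding differentiable_def by blast
  qed
  moreover have "sm S (partial_deriv i g)" for i
    by (rule sm.sm_cong[OF spec[OF conjunct2[OF sm_cong.IH], of i]]) (simp add: eq)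
  ultimately show ?case using sm_cong.IH by blast
qed

lemma sm_smooth:
  assumes "open S" "sm S f"
  shows "smooth_on_open S f"
proof -
  have "sm S (foldr partial_deriv is f)" for "is"
  proof (induction "is")
    case Nil then show ?case using assms(2) by simp
  next
    case (Cons i "is") then show ?case using sm_main[OF assms(1) Cons.IH] by simp
  qed
  then have "(foldr partial_deriv is f) differentiable_on S" for "is"
    using sm_main[OF assms(1)] by (simp add: differentiable_at_withinI differentiable_on_def)
  then show ?thesis using assms(1) by (simp add: smooth_on_open_def)
qed

lemma sm_sum:
  assumes "finite I" "\<And>i. i \<in> I \<Longrightarrow> sm S (f i)"
  shows "sm S (\<lambda>x. \<Sum>i\<in>I. f i x)"
  using assms
proof (induction I rule: finite_induct)
  case empty then show ?case using sm.sm_const[of S 0] by simp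
next
  case (insert i I)
  then show ?case using sm.sm_add[of S "f i" "\<lambda>x. \<Sum>i\<in>I. f i x"] by simp
qed

lemma pd_local2:
  fixes y :: "real^'n::finite"
  assumes "open S" "y \<in> S" "\<And>z. z \<in> S \<Longrightarrow> f z = g z"
  shows "partial_deriv i (partial_deriv j f) y = partial_deriv i (partial_deriv j g) y"
  by (rule pd_local[OF assms(1,2)]) (use pd_local[OF assms(1) _ assms(3)] in auto)

lemma lap_local:
  fixes y :: "real^'n::finite"
  assumes "open S" "y \<in> S" "\<And>z. z \<in> S \<Longrightarrow> f z = g z"
  shows "laplacian f y = laplacian g y"
  unfolding laplacian_def using pd_local2[OF assms] by simp

lemma lap_lines:
  fixes y :: "real^'n::finite"
  assumes "open S" "y \<in> S"
    and "\<And>z i. z \<in> S \<Longrightarrow> ((\<lambda>h. f (z + h *\<^sub>R axis i 1)) has_real_derivative P z i) (at 0)"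
    and "\<And>i. ((\<lambda>h. P (y + h *\<^sub>R axis i 1) i) has_real_derivative Q i) (at 0)"
  shows "laplacian f y = (\<Sum>i\<in>UNIV. Q i)"
proof -
  have "partial_deriv i (partial_deriv i f) y = Q i" for i
  proof -
    have "partial_deriv i (partial_deriv i f) y = partial_deriv i (\<lambda>z. P z i) y"
      by (rule pd_local[OF assms(1,2)]) (use pd_line[OF assms(3)] in auto)
    also have "\<dots> = Q i" by (rule pd_line[OF assms(4)])
    finally show ?thesis .
  qed
  then show ?thesis unfolding laplacian_def by simp
qed

definition AA :: "real^'n::finite \<Rightarrow> real" where "AA a = inner a a"
definition DD :: "real^'n::finite \<Rightarrow> real^'n \<Rightarrow> real" where
  "DD a y = AA a * inner y y - 2 * inner a y + 1"
definition basic :: "real^'n::finite \<Rightarrow> real \<Rightarrow> real \<Rightarrow> real \<Rightarrow> real^'n \<Rightarrow> real" where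
  "basic a b0 b1 p y = (b0 + b1 * inner y y) * DD a y powr p"
definition PB :: "real^'n::finite \<Rightarrow> real \<Rightarrow> real \<Rightarrow> real \<Rightarrow> real^'n \<Rightarrow> 'n \<Rightarrow> real" where
  "PB a b0 b1 p y i = 2*b1*(y$i) * DD a y powr p
     + (b0 + b1 * inner y y) * p * DD a y powr (p-1) * (2*AA a*(y$i) - 2*(a$i))"
definition QB :: "real^'n::finite \<Rightarrow> real \<Rightarrow> real \<Rightarrow> real \<Rightarrow> real^'n \<Rightarrow> 'n \<Rightarrow> real" where
  "QB a b0 b1 p y i = 2*b1 * DD a y powr p
     + 4*b1*(y$i)*p * DD a y powr (p-1) * (2*AA a*(y$i) - 2*(a$i))
     + (b0 + b1 * inner y y) * p * (p-1) * DD a y powr (p-2) * (2*AA a*(y$i) - 2*(a$i))^2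
     + (b0 + b1 * inner y y) * p * DD a y powr (p-1) * (2*AA a)"

lemma line_D:
  fixes y :: "real^'n::finite"
  shows "DD a (y + h *\<^sub>R axis i 1) = DD a y + h*(2*AA a*(y$i) - 2*(a$i)) + AA a*h^2"
  unfolding DD_def line_inner line_a by (simp add: algebra_simps power2_eq_square inner_axis')

lemma LD1:
  fixes y :: "real^'n::finite"
  assumes "0 < DD a y"
  shows "((\<lambda>h. basic a b0 b1 p (y + h *\<^sub>R axis i 1)) has_real_derivative PB a b0 b1 p y i) (at 0)"
  unfolding basic_def line_D line_inner
  apply (rule derivative_eq_intros refl | (use assms in simp; fail))+
  apply (simp add: PB_def)
  done

lemma LD2_aux: "(2*y*b1*p*P1 + (p-1)*P2*g*(B*p))*g = 2*(b1*(p*(y*(P1*g)))) + B*p*(p-1)*P2*g^2" for y b1 p P1 P2 g B :: real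
  by (simp add: algebra_simps power2_eq_square)

lemma LD2:
  fixes y :: "real^'n::finite"
  assumes "0 < DD a y"
  shows "((\<lambda>h. PB a b0 b1 p (y + h *\<^sub>R axis i 1) i) has_real_derivative QB a b0 b1 p y i) (at 0)"
proof -
  have e: "(y + h *\<^sub>R axis i 1) $ i = y $ i + h" for h by simp
  show ?thesis
  unfolding PB_def line_D line_inner e
  apply (rule derivative_eq_intros refl | (use assms in simp; fail))+
  apply (simp add: QB_def)
  apply (rule LD2_aux)
  done
qed

lemma inner_sum: "inner x y = (\<Sum>i\<in>UNIV. x$i * y$i)" for x y :: "real^'n::finite"
  by (simp add: inner_vec_def)

definition LB :: "real^'n::finite \<Rightarrow> real \<Rightarrow> real \<Rightarrow> real \<Rightarrow> real^'n \<Rightarrow> real" where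
  "LB a b0 b1 p y = b1*(2*real CARD('n) + 4*p) * DD a y powr p
    + (b0*2*AA a*p*(2*p-2+real CARD('n)) - 4*p*b1 + 2*AA a*p*(2*p+real CARD('n))*b1*inner y y) * DD a y powr (p-1)"

lemma powr_m1:
  assumes "0 < (x::real)" shows "x powr p = x * x powr (p - 1)"
  using powr_add[of x 1 "p - 1"] assms by simp

lemma powr_m2:
  assumes "0 < (x::real)" shows "x powr (p - 2) * x = x powr (p - 1)"
proof -
  have "x powr (p - 1) = x * x powr (p - 1 - 1)" by (rule powr_m1[OF assms])
  then show ?thesis by (simp add: mult.commute)
qed

lemma LB_alg:
  fixes n b0 b1 p A u v P :: real
  shows "n * (2 * b1 * ((A * u - 2 * v  +  1) * P))  +  4 * b1 * p * P * (2 * A * u - 2 * v)  +  (b0 + b1 * u) * p * (p-1) * (4 * A * P)  +  n * ((b0 + b1 * u) * p * P * (2 * A))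
     = b1 * (2 * n + 4 * p) * ((A * u - 2 * v  +  1) * P)  +  (b0 * 2 * A * p * (2 * p-2 + n) - 4 * p * b1  +  2 * A * p * (2 * p + n) * b1 * u) * P"
  by (simp add: algebra_simps)

lemma sum_QB:
  fixes y :: "real^'n::finite"
  assumes pos: "0 < DD a y"
  shows "(\<Sum>i\<in>UNIV. QB a b0 b1 p y i) = LB a b0 b1 p y"
proof -
  define D where "D = DD a y"
  define P where "P = D powr (p-1)"
  define g where "g i = 2*AA a*(y$i) - 2*(a$i)" for i
  define B where "B = b0 + b1 * inner y y"
  define K1 where "K1 = 2*b1 * D powr p"
  define K2 where "K2 = 4*b1*p*P"
  define K3 where "K3 = B * p * (p-1) * D powr (p-2)"
  define K4 where "K4 = B * p * P * (2*AA a)"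
  have Dpos: "0 < D" using pos by (simp add: D_def)
  have Dv: "D = AA a * inner y y - 2 * inner a y + 1" by (simp add: D_def DD_def)
  have q: "QB a b0 b1 p y i = K1 + K2 * (y$i * g i) + K3 * (g i)^2 + K4" for i
    by (simp add: QB_def K1_def K2_def K3_def K4_def g_def P_def D_def B_def mult_ac)
  have S0: "(\<Sum>i\<in>UNIV. QB a b0 b1 p y i) = real CARD('n) * K1 + K2 * (\<Sum>i\<in>UNIV. y$i * g i) + K3 * (\<Sum>i\<in>UNIV. (g i)^2) + real CARD('n) * K4"
    unfolding q by (simp add: sum.distrib sum_distrib_left)
  have S1: "(\<Sum>i\<in>UNIV. y$i * g i) = 2*AA a*inner y y - 2*inner a y"
  proof -
    have "(\<Sum>i\<in>UNIV. y$i * g i) = (\<Sum>i\<in>UNIV. 2*AA a*(y$i*y$i) - 2*(a$i*y$i))"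
      by (rule sum.cong) (simp_all add: g_def right_diff_distrib mult_ac)
    also have "\<dots> = 2*AA a*inner y y - 2*inner a y"
      by (simp add: inner_sum sum_subtractf sum_distrib_left)
    finally show ?thesis .
  qed
  have S2: "(\<Sum>i\<in>UNIV. (g i)^2) = 4*AA a*D"
  proof -
    have "(\<Sum>i\<in>UNIV. (g i)^2) = (\<Sum>i\<in>UNIV. 4*(AA a)^2*(y$i*y$i) - 8*AA a*(a$i*y$i) + 4*(a$i*a$i))"
      by (rule sum.cong) (simp_all add: g_def power2_eq_square algebra_simps)
    also have "\<dots> = 4*(AA a)^2*inner y y - 8*AA a*inner a y + 4*AA a"
      by (simp add: inner_sum sum_subtractf sum.distrib sum_distrib_left AA_def)
    finally show ?thesis unfolding Dv by (simp add: power2_eq_square algebra_simps)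
  qed
  have E1: "D powr p = D * P" unfolding P_def by (rule powr_m1[OF Dpos])
  have E2: "D powr (p-2) * D = P" unfolding P_def by (rule powr_m2[OF Dpos])
  have K3v: "K3 * (4 * AA a * D) = B * p * (p-1) * (4*AA a*P)"
    unfolding K3_def E2[symmetric] by (simp add: mult_ac)
  have L: "LB a b0 b1 p y = b1*(2*real CARD('n)+4*p)*(D*P) + (b0*2*AA a*p*(2*p-2+real CARD('n)) - 4*p*b1 + 2*AA a*p*(2*p+real CARD('n))*b1*inner y y)*P"
    unfolding LB_def D_def[symmetric] P_def[symmetric] E1 ..
  have "(\<Sum>i\<in>UNIV. QB a b0 b1 p y i) = real CARD('n) * (2*b1*(D*P)) + 4*b1*p*P*(2*AA a*inner y y - 2*inner a y) + B * p * (p-1) * (4*AA a*P) + real CARD('n) * (B * p * P * (2*AA a))"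
    unfolding S0 S1 S2 K3v by (simp add: K1_def E1 K2_def K4_def)
  also have "\<dots> = LB a b0 b1 p y"
    unfolding L B_def Dv by (rule LB_alg)
  finally show ?thesis .
qed

definition basic2 :: "real^'n::finite \<Rightarrow> real \<Rightarrow> real \<Rightarrow> real \<Rightarrow> real \<Rightarrow> real \<Rightarrow> real \<Rightarrow> real^'n \<Rightarrow> real" where
  "basic2 a b0 b1 p d0 d1 r y = basic a b0 b1 p y + basic a d0 d1 r y"

lemma open_DD: "open {z. 0 < DD a z}"
  unfolding DD_def by (intro open_Collect_less continuous_intros)

lemma lap_basic2:
  fixes y :: "real^'n::finite"
  assumes "0 < DD a y"
  shows "laplacian (basic2 a b0 b1 p d0 d1 r) y = LB a b0 b1 p y + LB a d0 d1 r y"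
proof -
  have "laplacian (basic2 a b0 b1 p d0 d1 r) y = (\<Sum>i\<in>UNIV. QB a b0 b1 p y i + QB a d0 d1 r y i)"
    unfolding basic2_def
    by (rule lap_lines[OF open_DD, where P="\<lambda>z i. PB a b0 b1 p z i + PB a d0 d1 r z i"])
       (use assms in \<open>auto intro!: DERIV_add LD1 LD2\<close>)
  then show ?thesis using sum_QB[OF assms] by (simp add: sum.distrib)
qed


definition cc :: "real^'n::finite \<Rightarrow> real" where "cc a = 1 - AA a"

lemma DD_norm: "DD a y = (norm a)^2 * (norm y)^2 - 2 * inner a y + 1"
  by (simp add: DD_def AA_def power2_norm_eq_inner)

lemma cc_norm: "cc a = 1 - (norm a)^2"
  by (simp add: cc_def AA_def power2_norm_eq_inner)

lemma U_repr:
  fixes a y :: "real^'n::finite"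
  assumes "0 < DD a y"
  shows "U_bubble a y = basic2 a (cc a powr ((real CARD('n)-4)/2)) 0 (-((real CARD('n)-4)/2))
     ((real CARD('n)-4)/4 * cc a powr ((real CARD('n)-2)/2)) (-((real CARD('n)-4)/4 * cc a powr ((real CARD('n)-2)/2)))
     (-((real CARD('n)-2)/2)) y"
proof -
  define D where "D = DD a y"
  have D: "(norm a)^2 * (norm y)^2 - 2 * inner a y + 1 = D" by (simp add: D_def DD_norm)
  have c: "1 - (norm a)^2 = cc a" by (simp add: cc_norm)
  have s: "(norm y)^2 = inner y y" by (simp add: power2_norm_eq_inner)
  have Dne: "D powr e \<noteq> 0" for e using assms by (simp add: D_def)
  show ?thesis
    unfolding U_bubble_def Let_def basic2_def basic_def D c D_def[symmetric]
    using Dne by (simp add: powr_divide powr_minus_divide s field_simps)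
qed


lemma lap_U_gen:
  fixes a y :: "real^'n::finite"
  shows "LB a b0 0 (-((real CARD('n)-4)/2)) y + LB a d0 (-d0) (-((real CARD('n)-2)/2)) y
    = basic2 a (-2*AA a*(real CARD('n)-4)*b0 - 4*d0) 0 (-((real CARD('n)-2)/2))
        (-2*(real CARD('n)-2)*d0) (2*AA a*(real CARD('n)-2)*d0) (-(real CARD('n)/2)) y"
proof -
  define n where "n = real CARD('n)"
  have e1: "-((n-4)/2) - 1 = -((n-2)/2)" by (simp add: field_simps)
  have e2: "-((n-2)/2) - 1 = -(n/2)" by (simp add: field_simps)
  define X where "X = DD a y powr (-((n-2)/2))"
  define Y where "Y = DD a y powr (-(n/2))"
  show ?thesis
    unfolding LB_def basic2_def basic_def n_def[symmetric] e1 e2 X_def[symmetric] Y_def[symmetric]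
    by (simp add: field_simps)
qed

lemma lap_lap_U_gen:
  fixes a y :: "real^'n::finite"
  shows "LB a (-2*AA a*(real CARD('n)-4)*b0 - 4*d0) 0 (-((real CARD('n)-2)/2)) y
        + LB a (-2*(real CARD('n)-2)*d0) (2*AA a*(real CARD('n)-2)*d0) (-(real CARD('n)/2)) y = 0"
proof -
  define n where "n = real CARD('n)"
  show ?thesis
    unfolding LB_def n_def[symmetric]
    by (simp add: field_simps)
qed


definition b0c :: "real^'n::finite \<Rightarrow> real" where
  "b0c a = cc a powr ((real CARD('n)-4)/2)"
definition d0c :: "real^'n::finite \<Rightarrow> real" where
  "d0c a = (real CARD('n)-4)/4 * cc a powr ((real CARD('n)-2)/2)"

lemma U_on_S:
  fixes a :: "real^'n::finite"
  shows "\<forall>z\<in>{z. 0 < DD a z}. U_bubble a z = basic2 a (b0c a) 0 (-((real CARD('n)-4)/2)) (d0c a) (- d0c a) (-((real CARD('n)-2)/2)) z"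
proof
  fix z assume "z \<in> {z. 0 < DD a z}"
  then show "U_bubble a z = basic2 a (b0c a) 0 (-((real CARD('n)-4)/2)) (d0c a) (- d0c a) (-((real CARD('n)-2)/2)) z"
    using U_repr[of a z] by (simp add: b0c_def d0c_def)
qed

lemma lapU:
  fixes a y :: "real^'n::finite"
  assumes "0 < DD a y"
  shows "laplacian (U_bubble a) y = basic2 a (-2*AA a*(real CARD('n)-4)*b0c a - 4*d0c a) 0 (-((real CARD('n)-2)/2))
        (-2*(real CARD('n)-2)*d0c a) (2*AA a*(real CARD('n)-2)*d0c a) (-(real CARD('n)/2)) y"
proof -
  have "laplacian (U_bubble a) y = laplacian (basic2 a (b0c a) 0 (-((real CARD('n)-4)/2)) (d0c a) (- d0c a) (-((real CARD('n)-2)/2))) y"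
    by (rule lap_local[OF open_DD]) (use assms U_on_S in auto)
  also have "\<dots> = LB a (b0c a) 0 (-((real CARD('n)-4)/2)) y + LB a (d0c a) (- d0c a) (-((real CARD('n)-2)/2)) y"
    by (rule lap_basic2[OF assms])
  also note lap_U_gen
  finally show ?thesis .
qed

lemma bilapU:
  fixes a y :: "real^'n::finite"
  assumes "0 < DD a y"
  shows "laplacian (laplacian (U_bubble a)) y = 0"
proof -
  have "laplacian (laplacian (U_bubble a)) y = laplacian (basic2 a (-2*AA a*(real CARD('n)-4)*b0c a - 4*d0c a) 0 (-((real CARD('n)-2)/2))
        (-2*(real CARD('n)-2)*d0c a) (2*AA a*(real CARD('n)-2)*d0c a) (-(real CARD('n)/2))) y"
    by (rule lap_local[OF open_DD]) (use assms lapU in auto)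
  also have "\<dots> = 0"
    unfolding lap_basic2[OF assms] by (rule lap_lap_U_gen)
  finally show ?thesis .
qed

lemma DD_pos:
  fixes a y :: "real^'n::finite"
  assumes "norm a < 1" "norm y \<le> 1"
  shows "0 < DD a y"
proof -
  define u where "u = norm a * norm y"
  have t: "inner a y \<le> u" unfolding u_def by (rule norm_cauchy_schwarz)
  have "u \<le> norm a * 1" unfolding u_def by (rule mult_left_mono[OF assms(2) norm_ge_zero])
  then have u1: "u < 1" using assms(1) by simp
  have "0 < (1 - u)^2" using u1 by simp
  moreover have "(1 - u)^2 = u^2 - 2*u + 1" by (simp add: power2_eq_square algebra_simps)
  ultimately have "0 < u^2 - 2 * inner a y + 1" using t by linarith
  then show ?thesis by (simp add: DD_norm power_mult_distrib u_def)
qed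


lemma cc_pos: "norm a < 1 \<Longrightarrow> 0 < cc a"
  by (simp add: cc_norm abs_square_less_1)

lemma U_alt:
  fixes a y :: "real^'n::finite"
  assumes "0 < DD a y"
  shows "U_bubble a y = (cc a * DD a y powr -1) powr ((real CARD('n)-4)/2)
     + (real CARD('n)-4)/4 * (1 - inner y y) * (cc a * DD a y powr -1) powr ((real CARD('n)-2)/2)"
proof -
  have q: "(1 - (norm a)\<^sup>2) / ((norm a)\<^sup>2 * (norm y)\<^sup>2 - 2 * (a \<bullet> y) + 1) = cc a * DD a y powr -1"
    using assms by (simp add: DD_norm cc_norm powr_neg_one)
  show ?thesis unfolding U_bubble_def Let_def q by (simp add: power2_norm_eq_inner)
qed

lemma sm_U:
  fixes a :: "real^'n::finite"
  assumes "norm a < 1"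
  shows "sm {z. 0 < DD a z} (U_bubble a)"
proof -
  define S where "S = {z::real^'n. 0 < DD a z}"
  have sI: "sm S (\<lambda>y. inner y y)"
    by (rule sm.sm_cong[OF sm_sum[of UNIV S "\<lambda>i y. y$i * y$i"]]) (auto intro: sm.intros simp: inner_sum)
  have sA: "sm S (\<lambda>y. inner a y)"
    by (rule sm.sm_cong[OF sm_sum[of UNIV S "\<lambda>i y. a$i * y$i"]]) (auto intro: sm.intros simp: inner_sum)
  have sD: "sm S (DD a)"
    by (rule sm.sm_cong[OF sm.sm_add[OF sm.sm_add[OF sm.sm_mult[OF sm.sm_const[of S "AA a"] sI] sm.sm_mult[OF sm.sm_const[of S "-2"] sA]] sm.sm_const[of S 1]]])
       (simp add: DD_def)
  have sq: "sm S (\<lambda>y. cc a * DD a y powr -1)"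
    by (rule sm.sm_mult[OF sm.sm_const sm.sm_powr[OF sD]]) (simp add: S_def)
  have s1: "sm S (\<lambda>y. 1 - inner y y)"
    by (rule sm.sm_cong[OF sm.sm_add[OF sm.sm_const[of S 1] sm.sm_mult[OF sm.sm_const[of S "-1"] sI]]]) simp
  have qpos: "\<forall>y\<in>S. 0 < cc a * DD a y powr -1"
    using cc_pos[OF assms] by (simp add: S_def)
  have "sm S (\<lambda>y. (cc a * DD a y powr -1) powr ((real CARD('n)-4)/2)
     + (real CARD('n)-4)/4 * (1 - inner y y) * (cc a * DD a y powr -1) powr ((real CARD('n)-2)/2))"
    by (rule sm.sm_add[OF sm.sm_powr[OF sq qpos] sm.sm_mult[OF sm.sm_mult[OF sm.sm_const s1] sm.sm_powr[OF sq qpos]]])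
  then have "sm S (U_bubble a)"
    by (rule sm.sm_cong) (simp add: S_def U_alt)
  then show ?thesis by (simp add: S_def)
qed

lemma U_pos:
  fixes a y :: "real^'n::finite"
  assumes "norm a < 1" "norm y \<le> 1" "CARD('n) \<ge> 3"
  shows "0 < U_bubble a y"
proof -
  define n where "n = real CARD('n)"
  define q where "q = cc a * DD a y powr -1"
  define al where "al = (n - 4) / 2"
  have D: "0 < DD a y" by (rule DD_pos[OF assms(1,2)])
  have c: "0 < cc a" by (rule cc_pos[OF assms(1)])
  have qpos: "0 < q" using D c by (simp add: q_def)
  have n3: "3 \<le> n" using assms(3) by (simp add: n_def)
  have s: "inner y y \<le> 1" using assms(2) by (simp add: dot_square_norm power_le_one)
  have m1: "(1 - inner y y) * q \<le> 1"
  proof -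
    have "2 * inner a y \<le> AA a + inner y y"
    proof -
      have "0 \<le> inner (a - y) (a - y)" by simp
      then show ?thesis by (simp add: AA_def inner_diff inner_commute algebra_simps)
    qed
    then have "(1 - inner y y) * cc a \<le> DD a y" by (simp add: DD_def cc_def algebra_simps)
    then show ?thesis using D by (simp add: q_def powr_neg_one divide_simps mult.commute)
  qed
  have m0: "0 \<le> (1 - inner y y) * q" using s qpos by simp
  have key: "0 < 1 + al / 2 * ((1 - inner y y) * q)"
  proof (cases "al \<ge> 0")
    case True then show ?thesis using m0 by (simp add: add_pos_nonneg)
  next
    case False
    then have "al / 2 * ((1 - inner y y) * q) \<ge> al / 2 * 1"
      using m1 by (intro mult_left_mono_neg) auto
    moreover have "al \<ge> -1/2" using n3 by (simp add: al_def)
    ultimately show ?thesis by linarith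
  qed
  have "U_bubble a y = q powr al * (1 + al / 2 * ((1 - inner y y) * q))"
  proof -
    have "q powr ((n-2)/2) = q powr al * q"
      using powr_add[of q al 1] qpos by (simp add: al_def field_simps)
    then show ?thesis unfolding U_alt[OF D] q_def[symmetric] n_def[symmetric] al_def
      by (simp add: algebra_simps)
  qed
  also have "\<dots> > 0" using key qpos by simp
  finally show ?thesis .
qed


definition DR :: "real^'n::finite \<Rightarrow> real \<Rightarrow> real \<Rightarrow> real" where
  "DR a t r = AA a * r^2 - 2*r*t + 1"
definition RB :: "real^'n::finite \<Rightarrow> real \<Rightarrow> real \<Rightarrow> real \<Rightarrow> real \<Rightarrow> real \<Rightarrow> real" where
  "RB a b0 b1 p t r = 2*b1*r * DR a t r powr p + (b0 + b1*r^2) * p * DR a t r powr (p-1) * (2*AA a*r - 2*t)"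
definition RB2 :: "real^'n::finite \<Rightarrow> real \<Rightarrow> real \<Rightarrow> real \<Rightarrow> real \<Rightarrow> real \<Rightarrow> real" where
  "RB2 a b0 b1 p t r = 2*b1 * DR a t r powr p + 4*b1*r*p*DR a t r powr (p-1)*(2*AA a*r - 2*t)
     + (b0+b1*r^2)*p*(p-1)*DR a t r powr (p-2)*(2*AA a*r - 2*t)^2 + (b0 + b1*r^2)*p*DR a t r powr (p-1)*(2*AA a)"

lemma DD_ray:
  fixes a x :: "real^'n::finite"
  assumes "norm x = 1"
  shows "DD a (r *\<^sub>R x) = DR a (inner a x) r"
proof -
  have "inner x x = 1" using assms by (simp add: dot_square_norm)
  then show ?thesis by (simp add: DD_def DR_def power2_eq_square)
qed

lemma basic_ray:
  fixes a x :: "real^'n::finite"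
  assumes "norm x = 1"
  shows "basic a b0 b1 p (r *\<^sub>R x) = (b0 + b1*r^2) * DR a (inner a x) r powr p"
proof -
  have "inner x x = 1" using assms by (simp add: dot_square_norm)
  then show ?thesis unfolding basic_def DD_ray[OF assms] by (simp add: power2_eq_square)
qed

lemma RB_deriv:
  assumes "0 < DR a t r"
  shows "((\<lambda>r. (b0 + b1*r^2) * DR a t r powr p) has_real_derivative RB a b0 b1 p t r) (at r)"
  unfolding DR_def
  apply (rule derivative_eq_intros refl | (use assms in \<open>simp add: DR_def\<close>; fail))+
  apply (simp add: RB_def DR_def)
  done

lemma RB2_aux:
  fixes p P1 P2 r A t b1 B :: real
  shows "p * P1 * (2 * r * A - 2 * t) * (2 * b1 * r) + (2 * r * b1 * p * P1 + (p - 1) * P2 * (2 * r * A - 2 * t) * (B * p)) * (2 * A * r - 2 * t)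
    = 4 * b1 * r * p * P1 * (2 * A * r - 2 * t) + B * p * (p - 1) * P2 * (2 * A * r - 2 * t)^2"
  by (simp add: algebra_simps power2_eq_square)

lemma RB2_deriv:
  assumes "0 < DR a t r"
  shows "((\<lambda>r. RB a b0 b1 p t r) has_real_derivative RB2 a b0 b1 p t r) (at r)"
  unfolding RB_def DR_def
  apply (rule derivative_eq_intros refl | (use assms in \<open>simp add: DR_def\<close>; fail))+
  apply (simp add: RB2_def DR_def)
  apply (rule RB2_aux)
  done


lemma ray_ev:
  fixes x :: "real^'n::finite"
  assumes "open S" "r0 *\<^sub>R x \<in> S"
  shows "eventually (\<lambda>r. r *\<^sub>R x \<in> S) (nhds r0)"
proof -
  have c: "continuous_on UNIV (\<lambda>r::real. r *\<^sub>R x)" by (intro continuous_intros)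
  have "open {r::real. r *\<^sub>R x \<in> S}"
    using continuous_open_preimage[OF c open_UNIV assms(1)] by (simp add: vimage_def)
  then show ?thesis using eventually_nhds_in_open[of "{r::real. r *\<^sub>R x \<in> S}" r0] assms(2) by simp
qed

lemma ray_deriv_basic2:
  fixes a x :: "real^'n::finite"
  assumes "norm x = 1" "0 < DD a (r0 *\<^sub>R x)" "\<forall>z. 0 < DD a z \<longrightarrow> f z = basic2 a b0 b1 p d0 d1 q z"
  shows "deriv (\<lambda>r. f (r *\<^sub>R x)) r0 = RB a b0 b1 p (inner a x) r0 + RB a d0 d1 q (inner a x) r0"
proof -
  have ev: "eventually (\<lambda>r. r *\<^sub>R x \<in> {z. 0 < DD a z}) (nhds r0)"
    by (rule ray_ev[OF open_DD]) (use assms(2) in simp)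
  have "deriv (\<lambda>r. f (r *\<^sub>R x)) r0 = deriv (\<lambda>r. (b0 + b1*r^2) * DR a (inner a x) r powr p + (d0 + d1*r^2) * DR a (inner a x) r powr q) r0"
    by (rule deriv_cong_ev[OF _ refl]) (use ev in \<open>eventually_elim\<close>, use assms in \<open>simp add: basic2_def basic_ray\<close>)
  also have "\<dots> = RB a b0 b1 p (inner a x) r0 + RB a d0 d1 q (inner a x) r0"
    using assms(2) DD_ray[OF assms(1), of a r0]
    by (intro DERIV_imp_deriv DERIV_add RB_deriv) auto
  finally show ?thesis .
qed

lemma rad_basic2:
  fixes a x :: "real^'n::finite"
  assumes "norm x = 1" "0 < DD a x" "\<forall>z. 0 < DD a z \<longrightarrow> f z = basic2 a b0 b1 p d0 d1 q z"
  shows "radial_deriv f x = RB a b0 b1 p (inner a x) 1 + RB a d0 d1 q (inner a x) 1"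
  unfolding radial_deriv_def by (rule ray_deriv_basic2) (use assms in auto)

lemma rad2_basic2:
  fixes a x :: "real^'n::finite"
  assumes "norm x = 1" "0 < DD a x" "\<forall>z. 0 < DD a z \<longrightarrow> f z = basic2 a b0 b1 p d0 d1 q z"
  shows "radial_deriv2 f x = RB2 a b0 b1 p (inner a x) 1 + RB2 a d0 d1 q (inner a x) 1"
proof -
  have ev: "eventually (\<lambda>r. r *\<^sub>R x \<in> {z. 0 < DD a z}) (nhds 1)"
    by (rule ray_ev[OF open_DD]) (use assms(2) in simp)
  have "radial_deriv2 f x = deriv (\<lambda>r. RB a b0 b1 p (inner a x) r + RB a d0 d1 q (inner a x) r) 1"
    unfolding radial_deriv2_def
    by (rule deriv_cong_ev[OF _ refl]) (use ev in \<open>eventually_elim\<close>, use assms in \<open>auto intro: ray_deriv_basic2\<close>)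
  also have "\<dots> = RB2 a b0 b1 p (inner a x) 1 + RB2 a d0 d1 q (inner a x) 1"
    using assms(2) DD_ray[OF assms(1), of a 1]
    by (intro DERIV_imp_deriv DERIV_add RB2_deriv) auto
  finally show ?thesis .
qed


lemma tau_line:
  fixes a z :: "real^'n::finite"
  assumes "z \<noteq> 0"
  shows "((\<lambda>h. inner a (z + h *\<^sub>R axis i 1) / norm (z + h *\<^sub>R axis i 1)) has_real_derivative
     (a$i / norm z - inner a z * z$i / norm z ^ 3)) (at 0)"
proof -
  have e: "(\<lambda>h. inner a (z + h *\<^sub>R axis i 1) / norm (z + h *\<^sub>R axis i 1))
     = (\<lambda>h. (inner a z + h * a$i) / sqrt (inner z z + 2*h*z$i + h^2))"
    by (simp only: norm_eq_sqrt_inner line_a[of a] line_inner)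
  have pos: "0 < inner z z" using assms by simp
  have N: "norm z = sqrt (inner z z)" by (simp add: norm_eq_sqrt_inner)
  show ?thesis unfolding e N
    apply (rule derivative_eq_intros refl | (use pos in simp; fail))+
    using pos apply (simp add: field_simps power3_eq_cube)
    done
qed


lemma K_line:
  fixes a x :: "real^'n::finite"
  assumes "norm x = 1"
  shows "((\<lambda>h. a$i / norm (x + h *\<^sub>R axis i 1) - inner a (x + h *\<^sub>R axis i 1) * (x + h *\<^sub>R axis i 1)$i / norm (x + h *\<^sub>R axis i 1) ^ 3)
     has_real_derivative (-2*a$i*x$i - inner a x + 3*inner a x*(x$i)^2)) (at 0)"
proof -
  have xx: "inner x x = 1" using assms by (simp add: dot_square_norm)
  have e: "(\<lambda>h. a$i / norm (x + h *\<^sub>R axis i 1) - inner a (x + h *\<^sub>R axis i 1) * (x + h *\<^sub>R axis i 1)$i / norm (x + h *\<^sub>R axis i 1) ^ 3)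
     = (\<lambda>h. a$i / sqrt (1 + 2*h*x$i + h^2) - (inner a x + h * a$i) * (x$i + h) / sqrt (1 + 2*h*x$i + h^2) ^ 3)"
    by (simp only: norm_eq_sqrt_inner line_a[of a] line_inner xx) simp
  show ?thesis unfolding e
    apply (rule derivative_eq_intros refl | (simp; fail))+
    apply (simp add: field_simps power2_eq_square)
    done
qed

lemma tau_bound:
  fixes a z :: "real^'n::finite"
  shows "\<bar>inner a z / norm z\<bar> \<le> norm a"
proof (cases "z = 0")
  case True then show ?thesis by simp
next
  case False
  then have "0 < norm z" by simp
  then show ?thesis using Cauchy_Schwarz_ineq2[of a z] by (simp add: abs_div divide_le_eq)
qed

lemma sph_lap:
  fixes a x :: "real^'n::finite"
  assumes x: "norm x = 1"
    and w: "\<And>\<tau>. \<bar>\<tau>\<bar> \<le> norm a \<Longrightarrow> (w has_real_derivative w1 \<tau>) (at \<tau>)"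
    and w': "\<And>\<tau>. \<bar>\<tau>\<bar> \<le> norm a \<Longrightarrow> (w1 has_real_derivative w2 \<tau>) (at \<tau>)"
  shows "laplacian (\<lambda>y. w (inner a y / norm y)) x
     = w2 (inner a x) * (AA a - (inner a x)^2) + (1 - real CARD('n)) * inner a x * w1 (inner a x)"
proof -
  define t where "t = inner a x"
  define PP where "PP z i = w1 (inner a z / norm z) * (a$i / norm z - inner a z * z$i / norm z ^ 3)" for z i
  have openS: "open {y::real^'n. y \<noteq> 0}"
    by (rule open_Collect_neq) (intro continuous_intros)+
  have x0: "x \<noteq> 0" using x by auto
  have L1: "((\<lambda>h. w (inner a (z + h *\<^sub>R axis i 1) / norm (z + h *\<^sub>R axis i 1))) has_real_derivative PP z i) (at 0)"
    if "z \<in> {y. y \<noteq> 0}" for z i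
  proof -
    have wz: "(w has_real_derivative w1 (inner a z / norm z)) (at (inner a (z + 0 *\<^sub>R axis i 1) / norm (z + 0 *\<^sub>R axis i 1)))"
      using w[OF tau_bound[of a z]] by simp
    show ?thesis using DERIV_chain2[OF wz tau_line[of z a i]] that by (simp add: PP_def)
  qed
  have L2: "((\<lambda>h. PP (x + h *\<^sub>R axis i 1) i) has_real_derivative
      w2 t * (a$i - t * x$i) * (a$i - t * x$i) + w1 t * (-2*a$i*x$i - t + 3*t*(x$i)^2)) (at 0)" for i
  proof -
    have wz: "(w1 has_real_derivative w2 t) (at (inner a (x + 0 *\<^sub>R axis i 1) / norm (x + 0 *\<^sub>R axis i 1)))"
      using w'[OF tau_bound[of a x]] x by (simp add: t_def)
    have d: "((\<lambda>h. PP (x + h *\<^sub>R axis i 1) i) has_real_derivative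
      (w2 t * (a$i / norm x - inner a x * x$i / norm x ^ 3)) * (a$i / norm (x + 0 *\<^sub>R axis i 1) - inner a (x + 0 *\<^sub>R axis i 1) * (x + 0 *\<^sub>R axis i 1)$i / norm (x + 0 *\<^sub>R axis i 1) ^ 3)
       + (-2*a$i*x$i - inner a x + 3*inner a x*(x$i)^2) * w1 (inner a (x + 0 *\<^sub>R axis i 1) / norm (x + 0 *\<^sub>R axis i 1))) (at 0)"
      unfolding PP_def by (rule DERIV_mult[OF DERIV_chain2[OF wz tau_line[OF x0]] K_line[OF x]])
    show ?thesis using d x by (simp add: t_def algebra_simps)
  qed
  have "laplacian (\<lambda>y. w (inner a y / norm y)) x = (\<Sum>i\<in>UNIV. w2 t * (a$i - t * x$i) * (a$i - t * x$i) + w1 t * (-2*a$i*x$i - t + 3*t*(x$i)^2))"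
    by (rule lap_lines[OF openS _ L1 L2]) (use x0 in auto)
  also have "\<dots> = w2 t * (AA a - t^2) + (1 - real CARD('n)) * t * w1 t"
  proof -
    have xx: "(\<Sum>i\<in>UNIV. x$i * x$i) = 1" using x by (simp add: dot_square_norm inner_sum[symmetric])
    have ax: "(\<Sum>i\<in>UNIV. a$i * x$i) = t" by (simp add: t_def inner_sum)
    have aa: "(\<Sum>i\<in>UNIV. a$i * a$i) = AA a" by (simp add: AA_def inner_sum)
    have "(\<Sum>i\<in>UNIV. w2 t * (a$i - t * x$i) * (a$i - t * x$i) + w1 t * (-2*a$i*x$i - t + 3*t*(x$i)^2))
      = (\<Sum>i\<in>UNIV. w2 t * (a$i * a$i) - 2 * (w2 t * t) * (a$i * x$i) + (w2 t * t^2) * (x$i * x$i)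
           - 2 * w1 t * (a$i * x$i) - w1 t * t + 3 * (w1 t * t) * (x$i * x$i))"
      by (rule sum.cong) (simp_all add: algebra_simps power2_eq_square)
    also have "\<dots> = w2 t * AA a - 2 * (w2 t * t) * t + (w2 t * t^2) * 1 - 2 * w1 t * t - real CARD('n) * (w1 t * t) + 3 * (w1 t * t) * 1"
      by (simp add: sum.distrib sum_subtractf sum_distrib_left[symmetric] xx ax aa)
    also have "\<dots> = w2 t * (AA a - t^2) + (1 - real CARD('n)) * t * w1 t"
      by (simp add: algebra_simps power2_eq_square)
    finally show ?thesis .
  qed
  finally show ?thesis by (simp add: t_def)
qed


lemma FIN_alg:
  fixes n A t C P :: real
  assumes D: "A - 2*t + 1 \<noteq> 0"
  defines "c \<equiv> 1 - A" and "DDD \<equiv> A - 2*t + 1" and "G \<equiv> 2*A - 2*t"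
  defines "d0 \<equiv> (n-4)/4 * c * C"
  defines "p1 \<equiv> -((n-4)/2)" and "p2 \<equiv> -((n-2)/2)" and "p3 \<equiv> -(n/2)"
  defines "E0 \<equiv> -2*A*(n-4)*C - 4*d0" and "F0 \<equiv> -2*(n-2)*d0" and "F1 \<equiv> 2*A*(n-2)*d0"
  shows "- (E0 * p2 * P * G + 2*F1*P + (F0+F1)*p3*(P/DDD)*G)
    - (n-4)/2 * (C*p1*(p1-1)*P*G^2 + C*p1*(DDD*P)*(2*A) - 2*d0*(DDD*P) - 4*d0*p2*P*G)
    - n/2 * ((4*C*p1*(p1-1)*P) * (A - t^2) + (1-n)*t*(-2*C*p1*(DDD*P)))
    + (n-4)*(n^2-3*n+4)/4 * (C*DDD^2*P)
    = n*(n-2)*(n-4)/4 * (C*c^3*P/DDD)"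
  using D unfolding c_def DDD_def G_def d0_def p1_def p2_def p3_def E0_def F0_def F1_def
  by (simp add: field_simps power2_eq_square power3_eq_cube)

lemma RAD_alg:
  fixes n A t C P :: real
  shows "C*(-((n-4)/2))*((A - 2*t + 1)*P)*(2*A - 2*t) - 2*((n-4)/4 * (1 - A) * C)*((A - 2*t + 1)*P)
     = -(n-4)/2 * (C*(A - 2*t + 1)^2*P)"
  by (simp add: field_simps power2_eq_square)

lemma powr_shift_nat: "0 < (D::real) \<Longrightarrow> e = f + real k \<Longrightarrow> D powr e = D^k * D powr f"
  by (simp add: powr_add powr_realpow)

lemma powr_shift_m1: "0 < (D::real) \<Longrightarrow> e = f - 1 \<Longrightarrow> D powr e = D powr f / D"
  using powr_m1[of D f] by simp

lemma boundary:
  fixes a x :: "real^'n::finite"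
  assumes a: "norm a < 1" and x: "norm x = 1" and n3: "CARD('n) \<ge> 3" and n4: "CARD('n) \<noteq> 4"
  shows "radial_deriv (U_bubble a) x = - (real CARD('n) - 4) / 2 * U_bubble a x"
    and "B33 (U_bubble a) x = real CARD('n) * (real CARD('n) - 2) * (real CARD('n) - 4) / 4
             * U_bubble a x powr ((real CARD('n) + 2) / (real CARD('n) - 4))"
proof -
  define n where "n = real CARD('n)"
  define t where "t = inner a x"
  define A where "A = AA a"
  define C where "C = b0c a"
  define c where "c = cc a"
  define D where "D = A - 2*t + 1"
  define P where "P = D powr (-(n/2))"
  have hD: "0 < DD a x" using DD_pos[OF a] x by simp
  have DDx: "DD a x = D" using DD_ray[OF x, of a 1] by (simp add: D_def DR_def A_def t_def)
  have Dpos: "0 < D" using hD DDx by simp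
  have DR1: "DR a t 1 = D" by (simp add: DR_def D_def A_def)
  have cA: "c = 1 - A" by (simp add: c_def cc_def A_def)
  have cpos: "0 < c" using cc_pos[OF a] by (simp add: c_def)
  have nn4: "n - 4 \<noteq> 0" using n4 by (simp add: n_def)
  have hd0: "d0c a = (n-4)/4 * c * C"
  proof -
    have "c powr ((n-2)/2) = c powr ((n-4)/2) * c"
      using powr_shift_nat[OF cpos, of "(n-2)/2" "(n-4)/2" 1] by (simp add: field_simps)
    then show ?thesis by (simp add: d0c_def b0c_def n_def[symmetric] c_def[symmetric] C_def)
  qed
  have US: "\<forall>z. 0 < DD a z \<longrightarrow> U_bubble a z = basic2 a C 0 (-((n-4)/2)) ((n-4)/4 * c * C) (- ((n-4)/4 * c * C)) (-((n-2)/2)) z"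
    using U_on_S[of a] by (simp add: n_def C_def hd0)
  have LS: "\<forall>z. 0 < DD a z \<longrightarrow> laplacian (U_bubble a) z = basic2 a (-2*A*(n-4)*C - 4*((n-4)/4 * c * C)) 0 (-((n-2)/2))
        (-2*(n-2)*((n-4)/4 * c * C)) (2*A*(n-2)*((n-4)/4 * c * C)) (-(n/2)) z"
    using lapU[of a] by (simp add: n_def C_def hd0 A_def)
  have xx: "inner x x = 1" using x by (simp add: dot_square_norm)
  have Ux: "U_bubble a x = C * D powr (-((n-4)/2))"
    using US hD DDx xx by (simp add: basic2_def basic_def)
  have r1: "D powr (-((n-4)/2)) = D^2 * P" unfolding P_def by (rule powr_shift_nat[OF Dpos]) (simp add: field_simps)
  have r2: "D powr (-((n-4)/2) - 1) = D^1 * P" unfolding P_def by (rule powr_shift_nat[OF Dpos]) (simp add: field_simps)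
  have r3: "D powr (-((n-4)/2) - 2) = D^0 * P" unfolding P_def by (rule powr_shift_nat[OF Dpos]) (simp add: field_simps)
  have r3': "D powr (-((n-4)/2) - 1 - 1) = D^0 * P" unfolding P_def by (rule powr_shift_nat[OF Dpos]) (simp add: field_simps)
  have r4: "D powr (-((n-2)/2)) = D^1 * P" unfolding P_def by (rule powr_shift_nat[OF Dpos]) (simp add: field_simps)
  have r5: "D powr (-((n-2)/2) - 1) = D^0 * P" unfolding P_def by (rule powr_shift_nat[OF Dpos]) (simp add: field_simps)
  have r6: "D powr (-((n-2)/2) - 2) = P / D" unfolding P_def by (rule powr_shift_m1[OF Dpos]) (simp add: field_simps)
  have r7: "D powr (-(n/2)) = P" by (simp add: P_def)
  have r8: "D powr (-(n/2) - 1) = P / D" unfolding P_def by (rule powr_shift_m1[OF Dpos]) simp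
  note rr = r1 r2 r3 r3' r4 r5 r6 r7 r8
  have rad: "radial_deriv (U_bubble a) x = RB a C 0 (-((n-4)/2)) t 1 + RB a ((n-4)/4 * c * C) (- ((n-4)/4 * c * C)) (-((n-2)/2)) t 1"
    unfolding t_def by (rule rad_basic2[OF x hD US])
  show "radial_deriv (U_bubble a) x = - (real CARD('n) - 4) / 2 * U_bubble a x"
    unfolding rad Ux n_def[symmetric] RB_def DR1 A_def[symmetric] rr c_def[symmetric]
    using RAD_alg[of C n A t P] by (simp add: D_def cA mult.assoc)
  have radL: "radial_deriv (laplacian (U_bubble a)) x = RB a (-2*A*(n-4)*C - 4*((n-4)/4 * c * C)) 0 (-((n-2)/2)) t 1
       + RB a (-2*(n-2)*((n-4)/4 * c * C)) (2*A*(n-2)*((n-4)/4 * c * C)) (-(n/2)) t 1"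
    unfolding t_def by (rule rad_basic2[OF x hD LS])
  have rad2: "radial_deriv2 (U_bubble a) x = RB2 a C 0 (-((n-4)/2)) t 1 + RB2 a ((n-4)/4 * c * C) (- ((n-4)/4 * c * C)) (-((n-2)/2)) t 1"
    unfolding t_def by (rule rad2_basic2[OF x hD US])
  define w where "w \<tau> = C * (A - 2*\<tau> + 1) powr (-((n-4)/2))" for \<tau>
  define w1 where "w1 \<tau> = -2*C*(-((n-4)/2))*(A - 2*\<tau> + 1) powr (-((n-4)/2) - 1)" for \<tau>
  define w2 where "w2 \<tau> = 4*C*(-((n-4)/2))*(-((n-4)/2) - 1)*(A - 2*\<tau> + 1) powr (-((n-4)/2) - 1 - 1)" for \<tau>
  have Epos: "0 < A - 2*\<tau> + 1" if "\<bar>\<tau>\<bar> \<le> norm a" for \<tau>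
  proof -
    have "A = (norm a)^2" by (simp add: A_def AA_def power2_norm_eq_inner)
    moreover have "0 < (1 - norm a)^2" using a by simp
    moreover have "(1 - norm a)^2 = (norm a)^2 - 2 * norm a + 1" by (simp add: power2_eq_square algebra_simps)
    ultimately show ?thesis using that by linarith
  qed
  have wd: "(w has_real_derivative w1 \<tau>) (at \<tau>)" if "\<bar>\<tau>\<bar> \<le> norm a" for \<tau>
    unfolding w_def w1_def
    apply (rule derivative_eq_intros refl | (use Epos[OF that] in simp; fail))+
    done
  have wd1: "(w1 has_real_derivative w2 \<tau>) (at \<tau>)" if "\<bar>\<tau>\<bar> \<le> norm a" for \<tau>
    unfolding w1_def w2_def
    apply (rule derivative_eq_intros refl | (use Epos[OF that] in simp; fail))+
    done
  have eS: "U_bubble a (y /\<^sub>R norm y) = w (inner a y / norm y)" if "y \<in> {y. y \<noteq> 0}" for y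
  proof -
    define z where "z = y /\<^sub>R norm y"
    have nz: "norm z = 1" using that by (simp add: z_def)
    have zz: "inner z z = 1" using nz by (simp add: dot_square_norm)
    have az: "inner a z = inner a y / norm y" by (simp add: z_def divide_inverse mult.commute)
    have Dz: "0 < DD a z" using DD_pos[OF a] nz by simp
    have "U_bubble a z = C * DD a z powr (-((n-4)/2))"
      using US Dz zz by (simp add: basic2_def basic_def)
    also have "DD a z = A - 2 * (inner a y / norm y) + 1" by (simp add: DD_def zz az A_def)
    finally show ?thesis by (simp add: z_def w_def)
  qed
  have sph: "sphere_laplacian (U_bubble a) x = w2 t * (A - t^2) + (1 - n) * t * w1 t"
  proof -
    have openS: "open {y::real^'n. y \<noteq> 0}"
      by (rule open_Collect_neq) (intro continuous_intros)+
    have "sphere_laplacian (U_bubble a) x = laplacian (\<lambda>y. w (inner a y / norm y)) x"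
      unfolding sphere_laplacian_def by (rule lap_local[OF openS]) (use x eS in auto)
    also have "\<dots> = w2 t * (A - t^2) + (1 - n) * t * w1 t"
      using sph_lap[OF x wd wd1] by (simp add: t_def A_def n_def)
    finally show ?thesis .
  qed
  have hR: "(C * D powr (-((n-4)/2))) powr ((n+2)/(n-4)) = C * c^3 * P / D"
  proof -
    have C: "C = c powr ((n-4)/2)" by (simp add: C_def b0c_def c_def n_def)
    have "(C * D powr (-((n-4)/2))) powr ((n+2)/(n-4)) = c powr ((n-4)/2 * ((n+2)/(n-4))) * D powr (-((n-4)/2) * ((n+2)/(n-4)))"
      unfolding C using cpos Dpos by (simp add: powr_mult powr_powr)
    also have "c powr ((n-4)/2 * ((n+2)/(n-4))) = c^3 * C"
      unfolding C by (rule powr_shift_nat[OF cpos]) (use nn4 in \<open>simp add: field_simps\<close>)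
    also have "D powr (-((n-4)/2) * ((n+2)/(n-4))) = P / D"
      unfolding P_def by (rule powr_shift_m1[OF Dpos]) (use nn4 in \<open>simp add: field_simps\<close>)
    finally show ?thesis by simp
  qed
  show "B33 (U_bubble a) x = real CARD('n) * (real CARD('n) - 2) * (real CARD('n) - 4) / 4
             * U_bubble a x powr ((real CARD('n) + 2) / (real CARD('n) - 4))"
    unfolding B33_def Let_def n_def[symmetric] radL rad2 sph Ux hR
    unfolding RB_def RB2_def DR1 w1_def w2_def A_def[symmetric] D_def[symmetric] rr
    using Dpos by (simp add: D_def cA field_simps power2_eq_square power3_eq_cube)
qed


theorem mainTheorem13:
  fixes a :: "real^'n::finite"
  assumes "CARD('n) \<ge> 3" and "CARD('n) \<noteq> 4" and "a \<in> ball 0 1"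
  shows "smooth_on_closed_ball (U_bubble a)
    \<and> (\<forall>x\<in>cball 0 1. U_bubble a x > 0)
    \<and> (\<forall>x\<in>ball 0 1. laplacian (laplacian (U_bubble a)) x = 0)
    \<and> (\<forall>x\<in>sphere 0 1. radial_deriv (U_bubble a) x
           = - (real CARD('n) - 4) / 2 * U_bubble a x)
    \<and> (\<forall>x\<in>sphere 0 1. B33 (U_bubble a) x
           = real CARD('n) * (real CARD('n) - 2) * (real CARD('n) - 4) / 4
             * U_bubble a x powr ((real CARD('n) + 2) / (real CARD('n) - 4)))"
proof -
  have a: "norm a < 1" using assms(3) by simp
  have sm1: "smooth_on_closed_ball (U_bubble a)"
    unfolding smooth_on_closed_ball_def
  proof (intro exI conjI)
    show "cball 0 1 \<subseteq> {z. 0 < DD a z}" using DD_pos[OF a] by auto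
    show "smooth_on_open {z. 0 < DD a z} (U_bubble a)" by (rule sm_smooth[OF open_DD sm_U[OF a]])
  qed
  have p: "\<forall>x\<in>cball 0 1. U_bubble a x > 0" using U_pos[OF a _ assms(1)] by simp
  have b: "\<forall>x\<in>ball 0 1. laplacian (laplacian (U_bubble a)) x = 0"
  proof
    fix x :: "real^'n" assume "x \<in> ball 0 1"
    then have "0 < DD a x" using DD_pos[OF a, of x] by simp
    then show "laplacian (laplacian (U_bubble a)) x = 0" by (rule bilapU)
  qed
  have r: "\<forall>x\<in>sphere 0 1. radial_deriv (U_bubble a) x = - (real CARD('n) - 4) / 2 * U_bubble a x"
    using boundary(1)[OF a _ assms(1,2)] by simp
  have B: "\<forall>x\<in>sphere 0 1. B33 (U_bubble a) x
           = real CARD('n) * (real CARD('n) - 2) * (real CARD('n) - 4) / 4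
             * U_bubble a x powr ((real CARD('n) + 2) / (real CARD('n) - 4))"
    using boundary(2)[OF a _ assms(1,2)] by simp
  show ?thesis using sm1 p b r B by blast
qed

end
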